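(* Let $N,n,m,p$ be positive integers, $A\in\mathbb{R}^{n\times n}$, $B\in\mathbb{R}^{n\times p}$, $C\in\mathbb{R}^{m\times n}$, $H\in\mathbb{R}^{n\times m}$, $W=[w_{ij}]\in\mathbb{R}^{N\times N}$ with $w_{ii}=0$ for all $i$, $\Delta=\mathrm{diag}(\delta_1,\dots,\delta_N)$ with $\delta_i\in\{0,1\}$, and $h>0$. Put $\mathcal{B}(h)=\int_0^h e^{A\tau}d\tau\,B$, $\mathcal{H}(h)=\int_0^h e^{A\tau}d\tau\,HC$, $\Phi_s=I_N\otimes e^{Ah}+W\otimes\mathcal{H}(h)$, $\Psi_s=\Delta\otimes\mathcal{B}(h)$. Let $\sigma(W)=\{\lambda_1,\dots,\lambda_r\}$ be the distinct eigenvalues of $W$ and $E_i=e^{Ah}+\lambda_i\mathcal{H}(h)$. Assume $W$ is singular and $0\notin\sigma(E_i)$ for every $i=1,\dots,r$. If the networked sampled-data system $X(k+1)=\Phi_sX(k)+\Psi_sU(k)$ is controllable, then the pair $(e^{Ah},\mathcal{B}(h))$ is controllable.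
   Context: The networked sampled-data system is the discrete-time system $X(k+1)=\Phi_sX(k)+\Psi_sU(k)$; it is called controllable if every initial state can be steered to the origin in finitely many steps. For $F\in\mathbb{C}^{q\times q}$, $G\in\mathbb{C}^{q\times s}$, the pair $(F,G)$ is called controllable if $\mathrm{rank}[sI_q-F,\ G]=q$ for every $s\in\mathbb{C}$. $\sigma(\cdot)$ denotes the set of eigenvalues and $\otimes$ the Kronecker product. *)

theory Defs
  imports "HOL-Analysis.Analysis" "Jordan_Normal_Form.DL_Rank" "Jordan_Normal_Form.Determinant" "Jordan_Normal_Form.Char_Poly"
begin

definition mat_exp :: "real mat \<Rightarrow> real mat" where
  "mat_exp A = mat (dim_row A) (dim_col A)
     (\<lambda>(i,j). \<Sum>k. (A ^\<^sub>m k) $$ (i,j) / fact k)"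

definition int_exp :: "real mat \<Rightarrow> real \<Rightarrow> real mat" where
  "int_exp A h = mat (dim_row A) (dim_col A)
     (\<lambda>(i,j). integral {0..h} (\<lambda>\<tau>. mat_exp (\<tau> \<cdot>\<^sub>m A) $$ (i,j)))"

definition kron :: "'a :: times mat \<Rightarrow> 'a mat \<Rightarrow> 'a mat" where
  "kron P Q = mat (dim_row P * dim_row Q) (dim_col P * dim_col Q)
     (\<lambda>(i,j). P $$ (i div dim_row Q, j div dim_col Q) * Q $$ (i mod dim_row Q, j mod dim_col Q))"

definition diag_of :: "nat \<Rightarrow> (nat \<Rightarrow> 'a :: zero) \<Rightarrow> 'a mat" where
  "diag_of N d = mat N N (\<lambda>(i,j). if i = j then d i else 0)"

definition hcat :: "'a :: zero mat \<Rightarrow> 'a mat \<Rightarrow> 'a mat" where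
  "hcat P Q = four_block_mat P Q (0\<^sub>m 0 (dim_col P)) (0\<^sub>m 0 (dim_col Q))"

definition dt_controllable :: "real mat \<Rightarrow> real mat \<Rightarrow> bool" where
  "dt_controllable Phi Psi \<longleftrightarrow>
     (\<forall>x0 \<in> carrier_vec (dim_row Phi). \<exists>K X U.
        X 0 = x0 \<and>
        (\<forall>k<K. U k \<in> carrier_vec (dim_col Psi) \<and> X (Suc k) = Phi *\<^sub>v X k + Psi *\<^sub>v U k) \<and>
        X K = 0\<^sub>v (dim_row Phi))"

definition pair_controllable :: "complex mat \<Rightarrow> complex mat \<Rightarrow> bool" where
  "pair_controllable F G \<longleftrightarrow>
     (\<forall>s::complex. vec_space.rank (dim_row F) (hcat (s \<cdot>\<^sub>m 1\<^sub>m (dim_row F) - F) G) = dim_row F)"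

abbreviation cmat :: "real mat \<Rightarrow> complex mat" where
  "cmat M \<equiv> map_mat complex_of_real M"

end

theory Submission
  imports Defs
begin

lemma rank_full_if_surj:
  fixes M :: "'a::field mat"
  assumes M: "M \<in> carrier_mat n k"
    and surj: "\<forall>y\<in>carrier_vec n. \<exists>z\<in>carrier_vec k. M *\<^sub>v z = y"
  shows "vec_space.rank n M = n"
proof -
  interpret vec_space "TYPE('a)" n .
  have cols: "set (cols M) \<subseteq> carrier_vec n" using M cols_dim by blast
  have "span (set (cols M)) = carrier_vec n"
  proof
    show "span (set (cols M)) \<subseteq> carrier_vec n" using span_closed[OF cols] by auto
    show "carrier_vec n \<subseteq> span (set (cols M))"
    proof
      fix y :: "'a vec" assume "y \<in> carrier_vec n"
      then obtain z where z: "z \<in> carrier_vec k" "M *\<^sub>v z = y" using surj by blast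
      have "\<forall>w\<in>set (cols M). dim_vec w = n" using cols by auto
      have "lincomb_list (\<lambda>j. z $ j) (cols M) = M *\<^sub>v z"
      proof -
        have "vec (length (cols M)) (\<lambda>j. z $ j) = z" using M z by auto
        moreover have "mat_of_cols n (cols M) = M" using M by (metis carrier_matD(1) mat_of_cols_cols)
        ultimately show ?thesis using lincomb_list_as_mat_mult[OF \<open>\<forall>w\<in>set (cols M). dim_vec w = n\<close>, of "\<lambda>j. z $ j"] by simp
      qed
      hence "y \<in> span_list (cols M)" using z by (auto simp: span_list_def)
      thus "y \<in> span (set (cols M))" using span_list_as_span[OF cols] by simp
    qed
  qed
  hence "rank M = vectorspace.dim class_ring (vs (carrier_vec n))" unfolding rank_def by simp
  also have "vs (carrier_vec n) = V" by simp
  finally show ?thesis using dim_is_n by simp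
qed

lemma surj_if_no_left_kernel:
  fixes M :: "complex mat"
  assumes M: "M \<in> carrier_mat n k"
    and ker: "\<forall>q\<in>carrier_vec n. transpose_mat M *\<^sub>v q = 0\<^sub>v k \<longrightarrow> q = 0\<^sub>v n"
  shows "\<forall>y\<in>carrier_vec n. \<exists>z\<in>carrier_vec k. M *\<^sub>v z = y"
proof -
  define MH where "MH = map_mat cnj (transpose_mat M)"
  have MH: "MH \<in> carrier_mat k n" using M by (simp add: MH_def)
  define P where "P = M * MH"
  have P: "P \<in> carrier_mat n n" using M MH by (simp add: P_def)
  have detP: "det P \<noteq> 0"
  proof
    assume "det P = 0"
    then obtain x where x: "x \<in> carrier_vec n" "x \<noteq> 0\<^sub>v n" "P *\<^sub>v x = 0\<^sub>v n"
      using det_0_iff_vec_prod_zero[OF P] by blast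
    define y where "y = MH *\<^sub>v x"
    have y: "y \<in> carrier_vec k" using MH x by (simp add: y_def)
    have My: "M *\<^sub>v y = 0\<^sub>v n" using x M MH unfolding y_def P_def
      by (metis assoc_mult_mat_vec)
    have yk: "\<And>j. j < k \<Longrightarrow> y $ j = (\<Sum>i<n. cnj (M $$ (i,j)) * x $ i)"
      using M MH x unfolding y_def MH_def
      by (auto simp: mult_mat_vec_def scalar_prod_def row_def intro!: sum.cong)
    have cyk: "\<And>j. j < k \<Longrightarrow> cnj (y $ j) = (\<Sum>i<n. M $$ (i,j) * cnj (x $ i))"
      using yk by simp
    have "0 = (\<Sum>i<n. cnj (x $ i) * (M *\<^sub>v y) $ i)" using My by simp
    also have "\<dots> = (\<Sum>i<n. cnj (x $ i) * (\<Sum>j<k. M $$ (i,j) * y $ j))"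
      using M y by (auto simp: mult_mat_vec_def scalar_prod_def row_def intro!: sum.cong)
    also have "\<dots> = (\<Sum>j<k. y $ j * (\<Sum>i<n. M $$ (i,j) * cnj (x $ i)))"
      by (simp add: sum_distrib_left sum_distrib_right mult_ac sum.swap[of _ "{..<n}"])
    also have "\<dots> = (\<Sum>j<k. y $ j * cnj (y $ j))" using cyk by simp
    also have "\<dots> = of_real (\<Sum>j<k. (cmod (y $ j))^2)"
      by (simp only: of_real_sum complex_norm_square)
    finally have "(\<Sum>j<k. (cmod (y $ j))^2) = 0" by (metis of_real_eq_0_iff)
    hence "\<forall>j\<in>{..<k}. (cmod (y $ j))^2 = 0" by (subst (asm) sum_nonneg_eq_0_iff) auto
    hence y0: "\<And>j. j < k \<Longrightarrow> y $ j = 0" by auto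
    have "transpose_mat M *\<^sub>v map_vec cnj x = 0\<^sub>v k"
    proof (rule eq_vecI)
      fix j assume "j < dim_vec (0\<^sub>v k :: complex vec)"
      hence j: "j < k" by simp
      have "(transpose_mat M *\<^sub>v map_vec cnj x) $ j = (\<Sum>i<n. M $$ (i,j) * cnj (x $ i))"
        using M x j by (auto simp: mult_mat_vec_def scalar_prod_def col_def intro!: sum.cong)
      also have "\<dots> = 0" using cyk[OF j] y0[OF j] by simp
      finally show "(transpose_mat M *\<^sub>v map_vec cnj x) $ j = 0\<^sub>v k $ j" using j by simp
    qed (use M in simp)
    hence "map_vec cnj x = 0\<^sub>v n" using ker x by auto
    hence "x = 0\<^sub>v n" using x
      by (metis (no_types, lifting) carrier_vecD complex_cnj_zero_iff eq_vecI index_map_vec(1,2) index_zero_vec(1,2))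
    with x show False by simp
  qed
  show ?thesis
  proof
    fix y :: "complex vec" assume y: "y \<in> carrier_vec n"
    define z where "z = MH *\<^sub>v ((1 / det P) \<cdot>\<^sub>v (adj_mat P *\<^sub>v y))"
    have adj: "adj_mat P \<in> carrier_mat n n" "P * adj_mat P = det P \<cdot>\<^sub>m 1\<^sub>m n" using adj_mat[OF P] by auto
    have "z \<in> carrier_vec k" using MH adj y by (simp add: z_def)
    moreover have "M *\<^sub>v z = y"
    proof -
      define w where "w = (1 / det P) \<cdot>\<^sub>v (adj_mat P *\<^sub>v y)"
      have w: "w \<in> carrier_vec n" using adj y by (simp add: w_def)
      have "M *\<^sub>v z = P *\<^sub>v w"
        unfolding z_def w_def[symmetric] unfolding P_def by (rule assoc_mult_mat_vec[symmetric, OF M MH w])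
      also have "\<dots> = P *\<^sub>v ((1 / det P) \<cdot>\<^sub>v (adj_mat P *\<^sub>v y))" by (simp add: w_def)
      also have "\<dots> = (1 / det P) \<cdot>\<^sub>v (P *\<^sub>v (adj_mat P *\<^sub>v y))"
        using P adj y by (simp add: mult_mat_vec)
      also have "P *\<^sub>v (adj_mat P *\<^sub>v y) = (P * adj_mat P) *\<^sub>v y"
        using P adj y by (metis assoc_mult_mat_vec)
      also have "\<dots> = det P \<cdot>\<^sub>v y" unfolding adj(2) using y
        by (intro eq_vecI) (auto simp: mult_mat_vec_def scalar_prod_def row_def mult.assoc if_distrib[of "\<lambda>x. x * _"] sum.delta cong: if_cong simp flip: sum_distrib_left)
      finally show ?thesis using detP y by (simp add: smult_smult_assoc)
    qed
    ultimately show "\<exists>z\<in>carrier_vec k. M *\<^sub>v z = y" by blast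
  qed
qed

lemma sum_group_idx:
  fixes g :: "nat \<Rightarrow> 'a::comm_monoid_add"
  shows "(\<Sum>k<N*n. g k) = (\<Sum>a<N. \<Sum>i<n. g (a*n+i))"
proof -
  have "(\<Sum>k<N*n. g k) = (\<Sum>a<N. sum g {a*n..<a*n+n})"
    using sum.nat_group[of g n N] by simp
  also have "\<dots> = (\<Sum>a<N. \<Sum>i<n. g (a*n+i))"
  proof (rule sum.cong[OF refl])
    fix a
    show "sum g {a*n..<a*n+n} = (\<Sum>i<n. g (a*n+i))"
      using sum.shift_bounds_nat_ivl[of g 0 "a*n" n] by (simp add: add.commute lessThan_atLeast0)
  qed
  finally show ?thesis .
qed

lemma idx_bound:
  fixes a i r r' :: nat
  assumes "a < r" "i < r'"
  shows "a * r' + i < r * r'"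
proof -
  have "a * r' + i < (a+1) * r'" using assms by simp
  also have "\<dots> \<le> r * r'" using assms by (intro mult_le_mono1) simp
  finally show ?thesis .
qed

lemma kron_idx:
  assumes "P \<in> carrier_mat r c" "Q \<in> carrier_mat r' c'"
    and "a < r" "i < r'" "b < c" "j < c'"
  shows "kron P Q $$ (a*r'+i, b*c'+j) = P $$ (a,b) * Q $$ (i,j)"
  using assms idx_bound[of a r i r'] idx_bound[of b c j c']
  by (simp add: kron_def)

lemma kron_carrier:
  assumes "P \<in> carrier_mat r c" "Q \<in> carrier_mat r' c'"
  shows "kron P Q \<in> carrier_mat (r*r') (c*c')"
  using assms by (simp add: kron_def)

lemma func_mult:
  fixes T :: "real mat" and w :: "complex vec"
  assumes "T \<in> carrier_mat R Cc" "x \<in> carrier_vec Cc"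
  shows "(\<Sum>k<R. w $ k * of_real ((T *\<^sub>v x) $ k))
       = (\<Sum>l<Cc. (\<Sum>k<R. w $ k * of_real (T $$ (k,l))) * of_real (x $ l))"
proof -
  have "(\<Sum>k<R. w $ k * of_real ((T *\<^sub>v x) $ k))
      = (\<Sum>k<R. w $ k * (\<Sum>l<Cc. of_real (T $$ (k,l)) * of_real (x $ l)))"
    using assms by (intro sum.cong refl) (auto simp: mult_mat_vec_def scalar_prod_def row_def lessThan_atLeast0 intro!: sum.cong)
  also have "\<dots> = (\<Sum>l<Cc. (\<Sum>k<R. w $ k * of_real (T $$ (k,l))) * of_real (x $ l))"
    by (simp add: sum_distrib_left sum_distrib_right mult_ac sum.swap[of _ "{..<R}"])
  finally show ?thesis .
qed

theorem corollary3:
  fixes N n m p :: nat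
    and A B C H W :: "real mat"
    and \<delta> :: "nat \<Rightarrow> real"
    and h :: real
  assumes "N > 0" "n > 0" "m > 0" "p > 0"
    and "A \<in> carrier_mat n n" "B \<in> carrier_mat n p" "C \<in> carrier_mat m n"
    and "H \<in> carrier_mat n m" "W \<in> carrier_mat N N"
    and "\<forall>i<N. W $$ (i,i) = 0"
    and "\<forall>i<N. \<delta> i \<in> {0,1}"
    and "h > 0"
    and "det W = 0"
    and "\<forall>lam. eigenvalue (cmat W) lam \<longrightarrow>
           \<not> eigenvalue (cmat (mat_exp (h \<cdot>\<^sub>m A)) + lam \<cdot>\<^sub>m cmat (int_exp A h * (H * C))) 0"
    and "dt_controllable
           (kron (1\<^sub>m N) (mat_exp (h \<cdot>\<^sub>m A)) + kron W (int_exp A h * (H * C)))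
           (kron (diag_of N \<delta>) (int_exp A h * B))"
  shows "pair_controllable (cmat (mat_exp (h \<cdot>\<^sub>m A))) (cmat (int_exp A h * B))"
proof -
  note A = assms(5) and B = assms(6) and C = assms(7) and H = assms(8) and W = assms(9)
  define F where "F = mat_exp (h \<cdot>\<^sub>m A)"
  define M0 where "M0 = int_exp A h * (H * C)"
  define G where "G = int_exp A h * B"
  define Phi where "Phi = kron (1\<^sub>m N) F + kron W M0"
  define Psi where "Psi = kron (diag_of N \<delta>) G"
  have F: "F \<in> carrier_mat n n" using A by (simp add: F_def mat_exp_def)
  have IE: "int_exp A h \<in> carrier_mat n n" using A by (simp add: int_exp_def)
  have M0: "M0 \<in> carrier_mat n n" using IE H C by (simp add: M0_def)
  have G: "G \<in> carrier_mat n p" using IE B by (simp add: G_def)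
  have D: "diag_of N \<delta> \<in> carrier_mat N N" by (simp add: diag_of_def)
  have Phi: "Phi \<in> carrier_mat (N*n) (N*n)"
    unfolding Phi_def using kron_carrier[OF one_carrier_mat F] kron_carrier[OF W M0] by simp
  have Psi: "Psi \<in> carrier_mat (N*n) (N*p)"
    unfolding Psi_def using kron_carrier[OF D G] by simp
  have ctrl: "dt_controllable Phi Psi" using assms(15) by (simp add: Phi_def Psi_def F_def M0_def G_def)
  have hyp: "\<forall>lam. eigenvalue (cmat W) lam \<longrightarrow> \<not> eigenvalue (cmat F + lam \<cdot>\<^sub>m cmat M0) 0"
    using assms(14) by (simp add: F_def M0_def)
  have cW: "cmat W \<in> carrier_mat N N" using W by simp
  have detcW: "det (cmat W) = 0" using assms(13) by simp
  have "det (transpose_mat (cmat W)) = 0" using detcW det_transpose[OF cW] by simp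
  then obtain v where v: "v \<in> carrier_vec N" "v \<noteq> 0\<^sub>v N" "transpose_mat (cmat W) *\<^sub>v v = 0\<^sub>v N"
    using det_0_iff_vec_prod_zero[of "transpose_mat (cmat W)" N] cW by auto
  have vW: "\<And>b. b < N \<Longrightarrow> (\<Sum>a<N. v $ a * of_real (W $$ (a,b))) = 0"
  proof -
    fix b assume b: "b < N"
    have "(transpose_mat (cmat W) *\<^sub>v v) $ b = 0" using v(3) b by simp
    thus "(\<Sum>a<N. v $ a * of_real (W $$ (a,b))) = 0"
      using b W v(1) by (simp add: mult_mat_vec_def scalar_prod_def col_def lessThan_atLeast0 mult.commute)
  qed
  have eig0W: "eigenvalue (cmat W) 0"
  proof -
    obtain x where x: "x \<in> carrier_vec N" "x \<noteq> 0\<^sub>v N" "cmat W *\<^sub>v x = 0\<^sub>v N"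
      using det_0_iff_vec_prod_zero[OF cW] detcW by auto
    have "(0::complex) \<cdot>\<^sub>v x = 0\<^sub>v N" using x(1) by (intro eq_vecI) auto
    thus ?thesis unfolding eigenvalue_def eigenvector_def using W x by auto
  qed
  have noeigF: "\<not> eigenvalue (cmat F) 0"
  proof -
    have "cmat F + 0 \<cdot>\<^sub>m cmat M0 = cmat F" using F M0 by (auto intro!: eq_matI)
    thus ?thesis using hyp eig0W by metis
  qed
  show ?thesis
    unfolding pair_controllable_def F_def[symmetric] G_def[symmetric]
  proof
    fix s :: complex
    define S where "S = s \<cdot>\<^sub>m 1\<^sub>m n - cmat F"
    define Mx where "Mx = hcat S (cmat G)"
    have S: "S \<in> carrier_mat n n" using F unfolding S_def by (intro minus_carrier_mat) auto
    have Mx: "Mx \<in> carrier_mat n (n+p)" using four_block_carrier_mat[OF S, of "0\<^sub>m 0 p" 0 p] unfolding Mx_def hcat_def using S G by simp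
    have dF: "dim_row (cmat F) = n" using F by simp
    show "vec_space.rank (dim_row (cmat F)) (hcat (s \<cdot>\<^sub>m 1\<^sub>m (dim_row (cmat F)) - cmat F) (cmat G)) = dim_row (cmat F)"
    proof (rule ccontr)
      assume "vec_space.rank (dim_row (cmat F)) (hcat (s \<cdot>\<^sub>m 1\<^sub>m (dim_row (cmat F)) - cmat F) (cmat G)) \<noteq> dim_row (cmat F)"
      hence rk: "vec_space.rank n Mx \<noteq> n" unfolding dF Mx_def S_def .
      have "\<not> (\<forall>q\<in>carrier_vec n. transpose_mat Mx *\<^sub>v q = 0\<^sub>v (n+p) \<longrightarrow> q = 0\<^sub>v n)"
        using rk rank_full_if_surj[OF Mx] surj_if_no_left_kernel[OF Mx] by blast
      then obtain q where q: "q \<in> carrier_vec n" "q \<noteq> 0\<^sub>v n" "transpose_mat Mx *\<^sub>v q = 0\<^sub>v (n+p)"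
        by blast
      have Mxe: "\<And>j. j < n+p \<Longrightarrow> (\<Sum>i<n. q $ i * Mx $$ (i,j)) = 0"
      proof -
        fix j assume j: "j < n+p"
        have "(transpose_mat Mx *\<^sub>v q) $ j = 0" using q(3) j by simp
        thus "(\<Sum>i<n. q $ i * Mx $$ (i,j)) = 0"
          using j Mx q(1) by (simp add: mult_mat_vec_def scalar_prod_def col_def lessThan_atLeast0 mult.commute)
      qed
      have Q1: "\<And>j. j < n \<Longrightarrow> (\<Sum>i<n. q $ i * of_real (F $$ (i,j))) = s * q $ j"
      proof -
        fix j assume j: "j < n"
        have "0 = (\<Sum>i<n. q $ i * Mx $$ (i,j))" using Mxe[of j] j by simp
        also have "\<dots> = (\<Sum>i<n. (if i = j then s * q $ i else 0) - q $ i * of_real (F $$ (i,j)))"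
          using j S G F by (intro sum.cong refl) (auto simp: Mx_def hcat_def S_def right_diff_distrib)
        also have "\<dots> = s * q $ j - (\<Sum>i<n. q $ i * of_real (F $$ (i,j)))"
          using j by (simp add: sum_subtractf)
        finally show "(\<Sum>i<n. q $ i * of_real (F $$ (i,j))) = s * q $ j" by simp
      qed
      have Q2: "\<And>j. j < p \<Longrightarrow> (\<Sum>i<n. q $ i * of_real (G $$ (i,j))) = 0"
      proof -
        fix j assume j: "j < p"
        have "0 = (\<Sum>i<n. q $ i * Mx $$ (i,n+j))" using Mxe[of "n+j"] j by simp
        also have "\<dots> = (\<Sum>i<n. q $ i * of_real (G $$ (i,j)))"
          using j S G F by (intro sum.cong refl) (auto simp: Mx_def hcat_def)
        finally show "(\<Sum>i<n. q $ i * of_real (G $$ (i,j))) = 0" by simp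
      qed
      have s0: "s \<noteq> 0"
      proof
        assume s0: "s = 0"
        have "transpose_mat (cmat F) *\<^sub>v q = 0\<^sub>v n"
          by (rule eq_vecI) (use Q1 s0 q(1) F in \<open>auto simp: mult_mat_vec_def scalar_prod_def col_def lessThan_atLeast0 mult.commute\<close>)
        hence "det (transpose_mat (cmat F)) = 0"
          using det_0_iff_vec_prod_zero[of "transpose_mat (cmat F)" n] F q by auto
        hence "det (cmat F) = 0" using det_transpose[of "cmat F" n] F by simp
        then obtain x where x: "x \<in> carrier_vec n" "x \<noteq> 0\<^sub>v n" "cmat F *\<^sub>v x = 0\<^sub>v n"
          using det_0_iff_vec_prod_zero[of "cmat F" n] F by auto
        have "(0::complex) \<cdot>\<^sub>v x = 0\<^sub>v n" using x(1) by (intro eq_vecI) auto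
        hence "eigenvalue (cmat F) 0" unfolding eigenvalue_def eigenvector_def using F x by auto
        with noeigF show False by simp
      qed
      define w where "w = vec (N*n) (\<lambda>k. v $ (k div n) * q $ (k mod n))"
      define f where "f = (\<lambda>x::real vec. \<Sum>k<N*n. w $ k * of_real (x $ k))"
      have wi: "\<And>a i. a < N \<Longrightarrow> i < n \<Longrightarrow> w $ (a*n+i) = v $ a * q $ i"
        using idx_bound by (simp add: w_def)
      have K1: "\<And>l. l < N*n \<Longrightarrow> (\<Sum>k<N*n. w $ k * of_real (Phi $$ (k,l))) = s * w $ l"
      proof -
        fix l assume l: "l < N*n"
        define b where "b = l div n"
        define j where "j = l mod n"
        have b: "b < N" using l unfolding b_def by (simp add: less_mult_imp_div_less)
        have j: "j < n" using assms(2) unfolding j_def by simp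
        have lbj: "l = b*n+j" unfolding b_def j_def by simp
        have e1: "w $ (a*n+i) * of_real (Phi $$ (a*n+i, b*n+j))
            = (if a = b then v $ a * (q $ i * of_real (F $$ (i,j))) else 0)
              + v $ a * of_real (W $$ (a,b)) * (q $ i * of_real (M0 $$ (i,j)))"
          if a: "a < N" and i: "i < n" for a i
        proof -
          have "Phi $$ (a*n+i, b*n+j) = 1\<^sub>m N $$ (a,b) * F $$ (i,j) + W $$ (a,b) * M0 $$ (i,j)"
            using kron_idx[OF one_carrier_mat F a i b j] kron_idx[OF W M0 a i b j]
              idx_bound[OF a i] idx_bound[OF b j] kron_carrier[OF W M0]
            by (simp add: Phi_def)
          thus ?thesis unfolding wi[OF a i] using a b by (cases "a = b") (simp_all add: algebra_simps)
        qed
        have "(\<Sum>k<N*n. w $ k * of_real (Phi $$ (k,l)))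
            = (\<Sum>a<N. \<Sum>i<n. w $ (a*n+i) * of_real (Phi $$ (a*n+i, b*n+j)))"
          unfolding sum_group_idx lbj ..
        also have "\<dots> = (\<Sum>a<N. \<Sum>i<n. (if a = b then v $ a * (q $ i * of_real (F $$ (i,j))) else 0))
              + (\<Sum>a<N. \<Sum>i<n. v $ a * of_real (W $$ (a,b)) * (q $ i * of_real (M0 $$ (i,j))))"
          by (simp add: e1 sum.distrib)
        also have "(\<Sum>a<N. \<Sum>i<n. (if a = b then v $ a * (q $ i * of_real (F $$ (i,j))) else 0))
            = (\<Sum>a<N. (if a = b then v $ a * (\<Sum>i<n. q $ i * of_real (F $$ (i,j))) else 0))"
          by (intro sum.cong refl) (simp add: sum_distrib_left)
        also have "\<dots> = v $ b * (s * q $ j)" using b j by (simp add: Q1)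
        also have "(\<Sum>a<N. \<Sum>i<n. v $ a * of_real (W $$ (a,b)) * (q $ i * of_real (M0 $$ (i,j))))
            = (\<Sum>a<N. v $ a * of_real (W $$ (a,b))) * (\<Sum>i<n. q $ i * of_real (M0 $$ (i,j)))"
          by (simp add: sum_product)
        also have "\<dots> = 0" using vW[OF b] by simp
        finally show "(\<Sum>k<N*n. w $ k * of_real (Phi $$ (k,l))) = s * w $ l"
          using lbj wi[OF b j] by simp
      qed
      have K2: "\<And>l. l < N*p \<Longrightarrow> (\<Sum>k<N*n. w $ k * of_real (Psi $$ (k,l))) = 0"
      proof -
        fix l assume l: "l < N*p"
        define b where "b = l div p"
        define j where "j = l mod p"
        have b: "b < N" using l unfolding b_def by (simp add: less_mult_imp_div_less)
        have j: "j < p" using assms(4) unfolding j_def by simp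
        have lbj: "l = b*p+j" unfolding b_def j_def by simp
        have e2: "w $ (a*n+i) * of_real (Psi $$ (a*n+i, b*p+j))
            = v $ a * of_real (diag_of N \<delta> $$ (a,b)) * (q $ i * of_real (G $$ (i,j)))"
          if a: "a < N" and i: "i < n" for a i
        proof -
          have "Psi $$ (a*n+i, b*p+j) = diag_of N \<delta> $$ (a,b) * G $$ (i,j)"
            using kron_idx[OF D G a i b j] by (simp add: Psi_def)
          thus ?thesis unfolding wi[OF a i] by (simp add: algebra_simps)
        qed
        have "(\<Sum>k<N*n. w $ k * of_real (Psi $$ (k,l)))
            = (\<Sum>a<N. \<Sum>i<n. w $ (a*n+i) * of_real (Psi $$ (a*n+i, b*p+j)))"
          unfolding sum_group_idx lbj ..
        also have "\<dots> = (\<Sum>a<N. v $ a * of_real (diag_of N \<delta> $$ (a,b)) * (\<Sum>i<n. q $ i * of_real (G $$ (i,j))))"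
          by (simp add: e2 sum_distrib_left)
        also have "\<dots> = 0" using Q2[OF j] by simp
        finally show "(\<Sum>k<N*n. w $ k * of_real (Psi $$ (k,l))) = 0" .
      qed
      have K3: "f (Phi *\<^sub>v x) = s * f x" if x: "x \<in> carrier_vec (N*n)" for x
      proof -
        have "f (Phi *\<^sub>v x) = (\<Sum>l<N*n. (\<Sum>k<N*n. w $ k * of_real (Phi $$ (k,l))) * of_real (x $ l))"
          unfolding f_def by (rule func_mult[OF Phi x])
        also have "\<dots> = (\<Sum>l<N*n. s * (w $ l * of_real (x $ l)))"
          by (intro sum.cong refl) (simp add: K1)
        also have "\<dots> = s * f x" by (simp add: f_def sum_distrib_left)
        finally show ?thesis .
      qed
      have K4: "f (Psi *\<^sub>v u) = 0" if u: "u \<in> carrier_vec (N*p)" for u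
      proof -
        have "f (Psi *\<^sub>v u) = (\<Sum>l<N*p. (\<Sum>k<N*n. w $ k * of_real (Psi $$ (k,l))) * of_real (u $ l))"
          unfolding f_def by (rule func_mult[OF Psi u])
        also have "\<dots> = 0"
          by (intro sum.neutral) (simp add: K2)
        finally show ?thesis .
      qed
      have fadd: "f (x + y) = f x + f y" if "x \<in> carrier_vec (N*n)" "y \<in> carrier_vec (N*n)" for x y
      proof -
        have "f (x + y) = (\<Sum>k<N*n. w $ k * of_real (x $ k) + w $ k * of_real (y $ k))"
          unfolding f_def using that by (intro sum.cong refl) (simp add: distrib_left)
        thus ?thesis by (simp add: f_def sum.distrib)
      qed
      obtain a0 where a0: "a0 < N" "v $ a0 \<noteq> 0"
        using v(1,2) by (metis carrier_vecD eq_vecI index_zero_vec(1,2))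
      obtain i0 where i0: "i0 < n" "q $ i0 \<noteq> 0"
        using q(1,2) by (metis carrier_vecD eq_vecI index_zero_vec(1,2))
      define l0 where "l0 = a0*n+i0"
      have l0: "l0 < N*n" unfolding l0_def using idx_bound[OF a0(1) i0(1)] .
      have wl0: "w $ l0 \<noteq> 0" unfolding l0_def using wi[OF a0(1) i0(1)] a0 i0 by simp
      define x0 :: "real vec" where "x0 = unit_vec (N*n) l0"
      have x0: "x0 \<in> carrier_vec (N*n)" by (simp add: x0_def)
      have fx0: "f x0 = w $ l0"
      proof -
        have "f x0 = (\<Sum>k<N*n. if k = l0 then w $ k else 0)"
          unfolding f_def x0_def by (intro sum.cong refl) (simp add: unit_vec_def)
        thus ?thesis using l0 by simp
      qed
      have dPhi: "dim_row Phi = N*n" and dPsi: "dim_col Psi = N*p" using Phi Psi by auto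
      obtain K X U where X0: "X 0 = x0"
        and step: "\<forall>k<K. U k \<in> carrier_vec (N*p) \<and> X (Suc k) = Phi *\<^sub>v X k + Psi *\<^sub>v U k"
        and XK: "X K = 0\<^sub>v (N*n)"
        using ctrl x0 unfolding dt_controllable_def dPhi dPsi by blast
      have traj: "k \<le> K \<Longrightarrow> X k \<in> carrier_vec (N*n) \<and> f (X k) = s^k * f x0" for k
      proof (induction k)
        case 0
        then show ?case using X0 x0 by simp
      next
        case (Suc k)
        hence IH: "X k \<in> carrier_vec (N*n)" "f (X k) = s^k * f x0" and kK: "k < K" by auto
        have U: "U k \<in> carrier_vec (N*p)" and XS: "X (Suc k) = Phi *\<^sub>v X k + Psi *\<^sub>v U k"
          using step kK by auto
        have c1: "Phi *\<^sub>v X k \<in> carrier_vec (N*n)" using Phi IH(1) by simp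
        have c2: "Psi *\<^sub>v U k \<in> carrier_vec (N*n)" using Psi U by simp
        have "f (X (Suc k)) = s * f (X k)" unfolding XS fadd[OF c1 c2] K3[OF IH(1)] K4[OF U] by simp
        thus ?case using XS c1 c2 IH(2) by simp
      qed
      have "f (X K) = 0" unfolding XK f_def by simp
      hence "s^K * w $ l0 = 0" using traj[of K] fx0 by simp
      thus False using s0 wl0 by simp
    qed
  qed
qed

end
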